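(* Let $I$ be a finite set and $T$ a tree on $I$. Let $a_1,\dots,a_k$ be atoms of the lattice $[\hat{0},T]$ whose vertices $v_1,\dots,v_k\in\mathcal{V}(T)$ are pairwise distinct. Then $\mathcal{V}(a_1\vee a_2\vee\dots\vee a_k)=\{v_1,\dots,v_k\}$, where the join is taken in $[\hat{0},T]$.
   Context: A tree on a finite set $I$ is a (non-planar) rooted binary tree whose leaves are bijectively labeled by $I$: vertices are inner vertices (valence $3$) and leaves and the root (valence $1$), edges oriented towards the root; one-leaf trees are allowed. A forest on $I$ is a set of trees whose leaf sets partition $I$; $\mathcal{V}(F)$ is its set of inner vertices. For forests $F,G$ on $I$, $F \leq G$ if there is a continuous map $F\to G$ which (D1) is increasing with respect to orientation towards the root, (D2) maps inner vertices to inner vertices injectively, (D3) is the identity of $I$ on leaves, (D4) is injective on each tree of $F$. This gives the poset $\operatorname{For}(I)$ with minimum $\hat{0}$ (no inner vertices); the interval $[\hat{0},T]$ is a lattice. For $F\le T$ the inner vertices of $F$ are regarded, via these maps, as a subset $\mathcal{V}(F)\subseteq\mathcal{V}(T)$. For distinct leaves $i,j$, $v_{(i,j)}$ is the inner vertex of $T$ where the paths from $i$ and $j$ down to the root meet. The atoms of $[\hat{0},T]$ are the forests with exactly one inner vertex; they correspond to unordered pairs $(i,j)$ of distinct elements of $I$ (one two-leaf tree on $\{i,j\}$, all other leaves isolated), and the vertex of the atom $(i,j)$ is $v_{(i,j)}$, i.e. $\mathcal{V}((i,j))=\{v_{(i,j)}\}$. *)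

theory Defs
  imports Main
begin

text \<open>A (non-planar) rooted binary tree with leaves labelled bijectively by J is
encoded by its hierarchy of clusters: every vertex other than the root is represented by the
set of leaves lying above it (i.e. whose path to the root passes through it). Leaves are the
singletons, inner vertices are the clusters with at least two elements. A forest on I is the
union of the hierarchies of its trees; its trees correspond to the maximal clusters.\<close>

definition is_forest :: "'a set \<Rightarrow> 'a set set \<Rightarrow> bool" where
  "is_forest I F \<longleftrightarrow>
     finite I \<and>
     (\<forall>C\<in>F. C \<noteq> {} \<and> C \<subseteq> I) \<and>
     (\<forall>i\<in>I. {i} \<in> F) \<and>
     (\<forall>C\<in>F. \<forall>D\<in>F. C \<subseteq> D \<or> D \<subseteq> C \<or> C \<inter> D = {}) \<and>
     (\<forall>C\<in>F. 2 \<le> card C \<longrightarrow>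
        (\<exists>A\<in>F. \<exists>B\<in>F. A \<inter> B = {} \<and> A \<union> B = C))"

definition is_tree :: "'a set \<Rightarrow> 'a set set \<Rightarrow> bool" where
  "is_tree I T \<longleftrightarrow> is_forest I T \<and> I \<noteq> {} \<and> I \<in> T"

definition inner :: "'a set set \<Rightarrow> 'a set set" where
  "inner F = {C \<in> F. 2 \<le> card C}"

definition children :: "'a set set \<Rightarrow> 'a set \<Rightarrow> 'a set set" where
  "children F C = {A \<in> F. A \<subset> C \<and> \<not> (\<exists>D\<in>F. A \<subset> D \<and> D \<subset> C)}"

text \<open>A map F \<rightarrow> G satisfying (D1)-(D4), recorded by its action on the non-root vertices
(leaves and inner vertices); edges are mapped onto the unique tree paths between the images
and root edges upwards. (D1): monotone w.r.t. the ancestor relation (= inclusion of clusters);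
(D2): inner vertices go injectively to inner vertices; (D3): identity on leaves;
(D4): injective on each tree, i.e. each edge is mapped onto a nondegenerate path and the two
edge-paths below the image of an inner vertex meet only in that image.\<close>
definition forest_morphism ::
  "'a set \<Rightarrow> 'a set set \<Rightarrow> 'a set set \<Rightarrow> ('a set \<Rightarrow> 'a set) \<Rightarrow> bool" where
  "forest_morphism I F G \<phi> \<longleftrightarrow>
     (\<forall>C\<in>F. \<phi> C \<in> G) \<and>
     (\<forall>C\<in>F. \<forall>C'\<in>F. C \<subseteq> C' \<longrightarrow> \<phi> C \<subseteq> \<phi> C') \<and>
     (\<forall>C\<in>inner F. \<phi> C \<in> inner G) \<and> inj_on \<phi> (inner F) \<and>
     (\<forall>i\<in>I. \<phi> {i} = {i}) \<and>
     (\<forall>C\<in>inner F. \<forall>A\<in>children F C. \<phi> A \<subset> \<phi> C) \<and>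
     (\<forall>C\<in>inner F. \<forall>A\<in>children F C. \<forall>B\<in>children F C. A \<noteq> B \<longrightarrow>
        \<not> (\<exists>D\<in>G. \<phi> A \<union> \<phi> B \<subseteq> D \<and> D \<subset> \<phi> C))"

definition forest_le :: "'a set \<Rightarrow> 'a set set \<Rightarrow> 'a set set \<Rightarrow> bool" where
  "forest_le I F G \<longleftrightarrow> is_forest I F \<and> is_forest I G \<and> (\<exists>\<phi>. forest_morphism I F G \<phi>)"

definition atom :: "'a set \<Rightarrow> 'a \<Rightarrow> 'a \<Rightarrow> 'a set set" where
  "atom I i j = {{x} | x. x \<in> I} \<union> {{i, j}}"

text \<open>v_(i,j): the vertex of T where the paths from i and j to the root meet, i.e. the
smallest cluster containing both.\<close>
definition vtx :: "'a set set \<Rightarrow> 'a \<Rightarrow> 'a \<Rightarrow> 'a set" where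
  "vtx T i j = \<Inter> {D \<in> T. i \<in> D \<and> j \<in> D}"

definition is_join_below ::
  "'a set \<Rightarrow> 'a set set \<Rightarrow> ('b \<Rightarrow> 'a set set) \<Rightarrow> 'b set \<Rightarrow> 'a set set \<Rightarrow> bool" where
  "is_join_below I T a M F \<longleftrightarrow>
     forest_le I F T \<and> (\<forall>m\<in>M. forest_le I (a m) F) \<and>
     (\<forall>G. forest_le I G T \<and> (\<forall>m\<in>M. forest_le I (a m) G) \<longrightarrow> forest_le I F G)"

end

theory Submission
  imports Defs
begin

definition hullc :: "'a set set \<Rightarrow> 'a set \<Rightarrow> 'a set" where
  "hullc G C = \<Inter>{D\<in>G. C \<subseteq> D}"

lemma chain_Inter_mem:
  assumes "finite Ds" "Ds \<noteq> {}" "\<forall>X\<in>Ds. \<forall>Y\<in>Ds. X \<subseteq> Y \<or> Y \<subseteq> X"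
  shows "\<Inter>Ds \<in> Ds"
  using assms
proof (induction Ds rule: finite_ne_induct)
  case (singleton x) then show ?case by simp
next
  case (insert x F)
  then have m: "\<Inter>F \<in> F" by blast
  moreover have "x \<subseteq> \<Inter>F \<or> \<Inter>F \<subseteq> x" using insert.prems m by blast
  ultimately show ?case
  proof (cases "x \<subseteq> \<Inter>F")
    case True then have "\<Inter>(insert x F) = x" by auto
    then show ?thesis by simp
  next
    case False then have "\<Inter>F \<subseteq> x" using \<open>x \<subseteq> \<Inter>F \<or> \<Inter>F \<subseteq> x\<close> by blast
    then have "\<Inter>(insert x F) = \<Inter>F" by auto
    then show ?thesis using m by simp
  qed
qed

lemma forest_finite: "is_forest I F \<Longrightarrow> finite F"
  unfolding is_forest_def by (meson PowI finite_Pow_iff finite_subset subsetI)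
lemma forest_sub: "is_forest I F \<Longrightarrow> C \<in> F \<Longrightarrow> C \<subseteq> I"
  unfolding is_forest_def by simp
lemma forest_ne: "is_forest I F \<Longrightarrow> C \<in> F \<Longrightarrow> C \<noteq> {}"
  unfolding is_forest_def by simp
lemma forest_single: "is_forest I F \<Longrightarrow> i \<in> I \<Longrightarrow> {i} \<in> F"
  unfolding is_forest_def by simp
lemma forest_lam: "is_forest I F \<Longrightarrow> C \<in> F \<Longrightarrow> D \<in> F \<Longrightarrow> C \<subseteq> D \<or> D \<subseteq> C \<or> C \<inter> D = {}"
  unfolding is_forest_def by blast
lemma forest_split: "is_forest I F \<Longrightarrow> C \<in> F \<Longrightarrow> 2 \<le> card C \<Longrightarrow>
   \<exists>A\<in>F. \<exists>B\<in>F. A \<inter> B = {} \<and> A \<union> B = C"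
  unfolding is_forest_def by blast
lemma forest_finI: "is_forest I F \<Longrightarrow> finite I"
  unfolding is_forest_def by blast
lemma forest_finC: "is_forest I F \<Longrightarrow> C \<in> F \<Longrightarrow> finite C"
  using forest_sub forest_finI finite_subset by metis

lemma hull_sup: "C \<subseteq> hullc G C"
  unfolding hullc_def by blast
lemma hull_least: "D \<in> G \<Longrightarrow> C \<subseteq> D \<Longrightarrow> hullc G C \<subseteq> D"
  unfolding hullc_def by blast
lemma hull_mono: "C \<subseteq> C' \<Longrightarrow> hullc G C \<subseteq> hullc G C'"
  unfolding hullc_def by blast

lemma hull_mem:
  assumes G: "is_forest I G" and "C \<noteq> {}" "D \<in> G" "C \<subseteq> D"
  shows "hullc G C \<in> G"
proof -
  let ?Ds = "{D\<in>G. C \<subseteq> D}"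
  have "finite ?Ds" using forest_finite[OF G] by simp
  moreover have "?Ds \<noteq> {}" using assms by blast
  moreover have "\<forall>X\<in>?Ds. \<forall>Y\<in>?Ds. X \<subseteq> Y \<or> Y \<subseteq> X"
    using forest_lam[OF G] \<open>C \<noteq> {}\<close> by blast
  ultimately have "\<Inter>?Ds \<in> ?Ds" by (rule chain_Inter_mem)
  then show ?thesis unfolding hullc_def by blast
qed

lemma hull_single: "is_forest I G \<Longrightarrow> i \<in> I \<Longrightarrow> hullc G {i} = {i}"
proof -
  assume "is_forest I G" "i \<in> I"
  then have "{i} \<in> G" by (rule forest_single)
  then have "hullc G {i} \<subseteq> {i}" by (rule hull_least) simp
  then show ?thesis using hull_sup[of "{i}" G] by (rule subset_antisym)
qed

lemma card2: "finite C \<Longrightarrow> a \<in> C \<Longrightarrow> b \<in> C \<Longrightarrow> a \<noteq> b \<Longrightarrow> 2 \<le> card C"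
proof -
  assume "finite C" "a \<in> C" "b \<in> C" "a \<noteq> b"
  then have "card {a,b} \<le> card C" by (intro card_mono) auto
  then show ?thesis using \<open>a \<noteq> b\<close> by simp
qed

lemma split_below:
  assumes F: "is_forest I F" and AB: "A \<in> F" "B \<in> F" "A \<inter> B = {}" "A \<union> B = C"
    and D: "D \<in> F" "D \<subset> C" "D \<inter> A \<noteq> {}"
  shows "D \<subseteq> A"
proof -
  have l1: "D \<subseteq> A \<or> A \<subseteq> D \<or> D \<inter> A = {}" and l2: "D \<subseteq> B \<or> B \<subseteq> D \<or> D \<inter> B = {}"
    using forest_lam[OF F] AB D by blast+
  show ?thesis using l1 l2 AB D by blast
qed

lemma children_split:
  assumes F: "is_forest I F" and C: "C \<in> F" and AB: "A \<in> F" "B \<in> F" "A \<inter> B = {}" "A \<union> B = C"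
  shows "children F C \<subseteq> {A, B}" "A \<in> children F C" "B \<in> children F C"
proof -
  have Ane: "A \<noteq> {}" "B \<noteq> {}" using forest_ne[OF F] AB by auto
  have AC: "A \<subset> C" "B \<subset> C" using AB Ane by auto
  show "children F C \<subseteq> {A, B}"
  proof
    fix X assume X: "X \<in> children F C"
    then have X1: "X \<in> F" "X \<subset> C" and X2: "\<not> (\<exists>D\<in>F. X \<subset> D \<and> D \<subset> C)"
      unfolding children_def by auto
    have "X \<noteq> {}" using forest_ne[OF F X1(1)] .
    then have "X \<inter> A \<noteq> {} \<or> X \<inter> B \<noteq> {}" using X1 AB by blast
    then show "X \<in> {A, B}"
    proof
      assume "X \<inter> A \<noteq> {}"
      then have "X \<subseteq> A" using split_below[OF F AB X1] by blast
      then show ?thesis using X2 AB AC by blast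
    next
      assume "X \<inter> B \<noteq> {}"
      moreover have "B \<inter> A = {}" "B \<union> A = C" using AB by blast+
      ultimately have "X \<subseteq> B" using split_below[OF F AB(2) AB(1) _ _ X1] by blast
      then show ?thesis using X2 AB AC by blast
    qed
  qed
  have "\<not> (\<exists>D\<in>F. A \<subset> D \<and> D \<subset> C)"
  proof
    assume "\<exists>D\<in>F. A \<subset> D \<and> D \<subset> C"
    then obtain D where D: "D \<in> F" "A \<subset> D" "D \<subset> C" by blast
    then have "D \<inter> A \<noteq> {}" using Ane by blast
    then have "D \<subseteq> A" using split_below[OF F AB D(1) D(3)] by blast
    then show False using D by blast
  qed
  then show "A \<in> children F C" unfolding children_def using AB AC by blast
  have "\<not> (\<exists>D\<in>F. B \<subset> D \<and> D \<subset> C)"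
  proof
    assume "\<exists>D\<in>F. B \<subset> D \<and> D \<subset> C"
    then obtain D where D: "D \<in> F" "B \<subset> D" "D \<subset> C" by blast
    then have "D \<inter> B \<noteq> {}" using Ane by blast
    moreover have "B \<inter> A = {}" "B \<union> A = C" using AB by blast+
    ultimately have "D \<subseteq> B" using split_below[OF F AB(2) AB(1) _ _ D(1) D(3)] by blast
    then show False using D by blast
  qed
  then show "B \<in> children F C" unfolding children_def using AB AC by blast
qed

lemma hull_morphism:
  assumes F: "is_forest I F" and G: "is_forest I G"
    and cover: "\<And>C. C \<in> F \<Longrightarrow> \<exists>D\<in>G. C \<subseteq> D"
    and strict: "\<And>C A. C \<in> inner F \<Longrightarrow> A \<in> children F C \<Longrightarrow> hullc G A \<noteq> hullc G C"
    and inj: "inj_on (hullc G) (inner F)"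
  shows "forest_morphism I F G (hullc G)"
proof -
  have mem: "hullc G C \<in> G" if CF: "C \<in> F" for C
  proof -
    obtain D where "D \<in> G" "C \<subseteq> D" using cover[OF CF] by blast
    then show ?thesis using hull_mem[OF G forest_ne[OF F CF]] by simp
  qed
  have inn: "hullc G C \<in> inner G" if "C \<in> inner F" for C
  proof -
    have C: "C \<in> F" "2 \<le> card C" using that unfolding inner_def by auto
    have "card C \<le> card (hullc G C)"
      using card_mono[OF forest_finC[OF G mem[OF C(1)]] hull_sup] .
    then show ?thesis using C mem[OF C(1)] unfolding inner_def by auto
  qed
  have ch: "hullc G A \<subset> hullc G C" if "C \<in> inner F" "A \<in> children F C" for C A
  proof -
    have "A \<subseteq> C" using that(2) unfolding children_def by auto
    then have "hullc G A \<subseteq> hullc G C" by (rule hull_mono)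
    then show ?thesis using strict[OF that] by auto
  qed
  have d4: "\<not> (\<exists>D\<in>G. hullc G A \<union> hullc G B \<subseteq> D \<and> D \<subset> hullc G C)"
    if "C \<in> inner F" "A \<in> children F C" "B \<in> children F C" "A \<noteq> B" for C A B
  proof -
    have C: "C \<in> F" "2 \<le> card C" using that unfolding inner_def by auto
    obtain A0 B0 where AB: "A0 \<in> F" "B0 \<in> F" "A0 \<inter> B0 = {}" "A0 \<union> B0 = C"
      using forest_split[OF F C] by blast
    have "children F C \<subseteq> {A0, B0}" using children_split[OF F C(1) AB] by blast
    then have "A \<in> {A0,B0}" "B \<in> {A0,B0}" using that(2,3) by auto
    then have "A \<union> B = C" using that(4) AB(4) by auto
    show ?thesis
    proof
      assume "\<exists>D\<in>G. hullc G A \<union> hullc G B \<subseteq> D \<and> D \<subset> hullc G C"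
      then obtain D where D: "D \<in> G" "hullc G A \<union> hullc G B \<subseteq> D" "D \<subset> hullc G C" by blast
      have "A \<subseteq> D" "B \<subseteq> D" using D(2) hull_sup[of A G] hull_sup[of B G] by auto
      then have "C \<subseteq> D" using \<open>A \<union> B = C\<close> by auto
      then have "hullc G C \<subseteq> D" by (rule hull_least[OF D(1)])
      then show False using D(3) by auto
    qed
  qed
  have sg: "\<forall>i\<in>I. hullc G {i} = {i}" using hull_single[OF G] by simp
  have mono: "\<forall>C\<in>F. \<forall>C'\<in>F. C \<subseteq> C' \<longrightarrow> hullc G C \<subseteq> hullc G C'"
    using hull_mono[of _ _ G] by blast
  show ?thesis unfolding forest_morphism_def
    using mem inn ch d4 inj sg mono by simp
qed

lemma id_morphism:
  assumes T: "is_forest I T"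
  shows "forest_morphism I T T id"
proof -
  have d4: "\<not> (\<exists>D\<in>T. A \<union> B \<subseteq> D \<and> D \<subset> C)"
    if "C \<in> inner T" "A \<in> children T C" "B \<in> children T C" "A \<noteq> B" for C A B
  proof -
    have C: "C \<in> T" "2 \<le> card C" using that unfolding inner_def by auto
    obtain A0 B0 where AB: "A0 \<in> T" "B0 \<in> T" "A0 \<inter> B0 = {}" "A0 \<union> B0 = C"
      using forest_split[OF T C] by blast
    have "children T C \<subseteq> {A0, B0}" using children_split[OF T C(1) AB] by blast
    then have "A \<union> B = C" using that AB by blast
    then show ?thesis by blast
  qed
  show ?thesis unfolding forest_morphism_def
  proof (intro conjI)
    show "\<forall>C\<in>inner T. \<forall>A\<in>children T C. \<forall>B\<in>children T C. A \<noteq> B \<longrightarrow>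
        \<not> (\<exists>D\<in>T. id A \<union> id B \<subseteq> D \<and> D \<subset> id C)" using d4 by simp
  qed (auto simp: children_def inner_def)
qed

lemma key_lemma:
  assumes G: "is_forest I G" and T: "is_forest I T" and rho: "forest_morphism I G T \<rho>"
    and C: "C \<in> G" "p \<in> C" "q \<in> C" "p \<noteq> q"
    and Cmin: "\<And>D. D \<in> G \<Longrightarrow> p \<in> D \<Longrightarrow> q \<in> D \<Longrightarrow> C \<subseteq> D"
  shows "\<rho> C = hullc T {p, q}"
proof -
  have c2: "2 \<le> card C" using card2[OF forest_finC[OF G C(1)] C(2-4)] .
  obtain A B where AB: "A \<in> G" "B \<in> G" "A \<inter> B = {}" "A \<union> B = C"
    using forest_split[OF G C(1) c2] by blast
  have Ane: "A \<noteq> {}" "B \<noteq> {}" using forest_ne[OF G] AB by auto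
  have ch: "A \<in> children G C" "B \<in> children G C" using children_split[OF G C(1) AB] by auto
  have inner: "C \<in> inner G" using c2 C(1) by (simp add: inner_def)
  have notboth: "\<not> (p \<in> A \<and> q \<in> A)" "\<not> (p \<in> B \<and> q \<in> B)"
  proof -
    show "\<not> (p \<in> A \<and> q \<in> A)"
    proof
      assume "p \<in> A \<and> q \<in> A"
      then have "C \<subseteq> A" using Cmin[OF AB(1)] by blast
      then show False using AB Ane by blast
    qed
    show "\<not> (p \<in> B \<and> q \<in> B)"
    proof
      assume "p \<in> B \<and> q \<in> B"
      then have "C \<subseteq> B" using Cmin[OF AB(2)] by blast
      then show False using AB Ane by blast
    qed
  qed
  have pI: "p \<in> I" "q \<in> I" using forest_sub[OF G C(1)] C by auto
  have R: "\<forall>C\<in>G. \<rho> C \<in> T" "\<forall>C\<in>G. \<forall>C'\<in>G. C \<subseteq> C' \<longrightarrow> \<rho> C \<subseteq> \<rho> C'"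
    "\<forall>i\<in>I. \<rho> {i} = {i}" "\<forall>C\<in>inner G. \<forall>A\<in>children G C. \<rho> A \<subset> \<rho> C"
    "\<forall>C\<in>inner G. \<forall>A\<in>children G C. \<forall>B\<in>children G C. A \<noteq> B \<longrightarrow>
        \<not> (\<exists>D\<in>T. \<rho> A \<union> \<rho> B \<subseteq> D \<and> D \<subset> \<rho> C)"
    using rho unfolding forest_morphism_def by simp_all
  have main: "\<rho> C = hullc T {p,q}"
    if A': "A' \<in> children G C" and B': "B' \<in> children G C" "A' \<noteq> B'" "p \<in> A'" "q \<in> B'" for A' B'
  proof -
    have A'G: "A' \<in> G" "B' \<in> G" "A' \<subseteq> C" "B' \<subseteq> C"
      using A' B' unfolding children_def by auto
    have sA: "\<rho> A' \<subset> \<rho> C" "\<rho> B' \<subset> \<rho> C"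
      using bspec[OF bspec[OF R(4) inner] A'] bspec[OF bspec[OF R(4) inner] B'(1)] by auto
    have mT: "\<rho> A' \<in> T" "\<rho> B' \<in> T" "\<rho> C \<in> T"
      using bspec[OF R(1) A'G(1)] bspec[OF R(1) A'G(2)] bspec[OF R(1) C(1)] by auto
    have sp: "{p} \<in> G" "{q} \<in> G" using forest_single[OF G] pI by auto
    have "\<rho> {p} \<subseteq> \<rho> A'" using bspec[OF bspec[OF R(2) sp(1)] A'G(1)] B'(3) by auto
    then have pA: "p \<in> \<rho> A'" using bspec[OF R(3) pI(1)] by auto
    have "\<rho> {q} \<subseteq> \<rho> B'" using bspec[OF bspec[OF R(2) sp(2)] A'G(2)] B'(4) by auto
    then have qB: "q \<in> \<rho> B'" using bspec[OF R(3) pI(2)] by auto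
    have nod: "\<not> (\<exists>D\<in>T. \<rho> A' \<union> \<rho> B' \<subseteq> D \<and> D \<subset> \<rho> C)"
      using bspec[OF bspec[OF bspec[OF R(5) inner] A'] B'(1)] B'(2) by auto
    have pC: "p \<in> \<rho> C" "q \<in> \<rho> C" using sA pA qB by auto
    define V where "V = hullc T {p,q}"
    have pqC: "{p,q} \<subseteq> \<rho> C" using pC by simp
    have VT: "V \<in> T" unfolding V_def by (rule hull_mem[OF T _ mT(3) pqC]) simp
    have pV: "p \<in> V" "q \<in> V" unfolding V_def using hull_sup[of "{p,q}" T] by auto
    have VC: "V \<subseteq> \<rho> C" unfolding V_def by (rule hull_least[OF mT(3) pqC])
    have ne1: "\<rho> A' \<inter> V \<noteq> {}" using pA pV(1) by auto
    have ne2: "\<rho> B' \<inter> V \<noteq> {}" using qB pV(2) by auto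
    have l1: "\<rho> A' \<subseteq> V \<or> V \<subseteq> \<rho> A'" using forest_lam[OF T mT(1) VT] ne1 by argo
    have l2: "\<rho> B' \<subseteq> V \<or> V \<subseteq> \<rho> B'" using forest_lam[OF T mT(2) VT] ne2 by argo
    have l3: "\<rho> A' \<subseteq> \<rho> B' \<or> \<rho> B' \<subseteq> \<rho> A'" if "V \<subseteq> \<rho> A'"
    proof -
      have "q \<in> \<rho> A' \<inter> \<rho> B'" using that pV(2) qB by blast
      then have "\<rho> A' \<inter> \<rho> B' \<noteq> {}" by blast
      then show ?thesis using forest_lam[OF T mT(1) mT(2)] by argo
    qed
    have l4: "\<rho> A' \<subseteq> \<rho> B' \<or> \<rho> B' \<subseteq> \<rho> A'" if "V \<subseteq> \<rho> B'"
    proof -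
      have "p \<in> \<rho> A' \<inter> \<rho> B'" using that pV(1) pA by blast
      then have "\<rho> A' \<inter> \<rho> B' \<noteq> {}" by blast
      then show ?thesis using forest_lam[OF T mT(1) mT(2)] by argo
    qed
    have nod': "\<not> (\<rho> A' \<union> \<rho> B' \<subseteq> D \<and> D \<subset> \<rho> C)" if "D \<in> T" for D
      using nod that by blast
    have "\<rho> C \<subseteq> V"
    proof (rule ccontr)
      assume "\<not> \<rho> C \<subseteq> V"
      then have VC': "V \<subset> \<rho> C" using VC by auto
      show False
      proof (cases "V \<subseteq> \<rho> A' \<or> V \<subseteq> \<rho> B'")
        case True
        then have "\<rho> A' \<subseteq> \<rho> B' \<or> \<rho> B' \<subseteq> \<rho> A'" using l3 l4 by blast
        then show False
        proof
          assume "\<rho> A' \<subseteq> \<rho> B'"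
          then have "\<rho> A' \<union> \<rho> B' \<subseteq> \<rho> B'" by (rule Un_least) simp
          then show False using nod'[OF mT(2)] sA(2) by simp
        next
          assume "\<rho> B' \<subseteq> \<rho> A'"
          then have "\<rho> A' \<union> \<rho> B' \<subseteq> \<rho> A'" by (intro Un_least) simp_all
          then show False using nod'[OF mT(1)] sA(1) by simp
        qed
      next
        case False
        then have "\<rho> A' \<subseteq> V" "\<rho> B' \<subseteq> V" using l1 l2 by blast+
        then have "\<rho> A' \<union> \<rho> B' \<subseteq> V" by (rule Un_least)
        then show False using nod'[OF VT] VC' by simp
      qed
    qed
    then have "\<rho> C = V" using VC by (rule subset_antisym)
    then show ?thesis unfolding V_def .
  qed
  have AB': "A \<noteq> B" using AB Ane by blast
  have "p \<in> A \<union> B" "q \<in> A \<union> B" using AB(4) C(2,3) by auto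
  then have "(p \<in> A \<and> q \<in> B) \<or> (p \<in> B \<and> q \<in> A)" using notboth by blast
  then show ?thesis
  proof
    assume "p \<in> A \<and> q \<in> B"
    then show ?thesis using main[OF ch(1) ch(2) AB'] by blast
  next
    assume "p \<in> B \<and> q \<in> A"
    then show ?thesis using main[OF ch(2) ch(1) AB'[symmetric]] by blast
  qed
qed

lemma atom_forest:
  assumes "finite I" "a \<in> I" "b \<in> I" "a \<noteq> b"
  shows "is_forest I (atom I a b)"
proof -
  have c: "card C = 1 \<or> C = {a,b}" if "C \<in> atom I a b" for C
    using that unfolding atom_def by auto
  show ?thesis unfolding is_forest_def
  proof (intro conjI ballI impI)
    fix C assume C: "C \<in> atom I a b" "2 \<le> card C"
    then have "C = {a,b}" using c by fastforce
    then show "\<exists>A\<in>atom I a b. \<exists>B\<in>atom I a b. A \<inter> B = {} \<and> A \<union> B = C"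
      using assms unfolding atom_def by (intro bexI[of _ "{a}"] bexI[of _ "{b}"]) auto
  qed (use assms in \<open>auto simp: atom_def\<close>)
qed

lemma atom_inner: "a \<noteq> b \<Longrightarrow> inner (atom I a b) = {{a,b}}"
  unfolding inner_def atom_def by auto

lemma atom_cover:
  assumes "forest_le I (atom I a b) G" "a \<in> I" "b \<in> I"
  shows "\<exists>D\<in>G. {a,b} \<subseteq> D"
proof -
  obtain \<alpha> where al: "forest_morphism I (atom I a b) G \<alpha>" using assms unfolding forest_le_def by blast
  have R: "\<forall>C\<in>atom I a b. \<alpha> C \<in> G" "\<forall>C\<in>atom I a b. \<forall>C'\<in>atom I a b. C \<subseteq> C' \<longrightarrow> \<alpha> C \<subseteq> \<alpha> C'"
    "\<forall>i\<in>I. \<alpha> {i} = {i}"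
    using al unfolding forest_morphism_def by simp_all
  have m: "{a,b} \<in> atom I a b" "{a} \<in> atom I a b" "{b} \<in> atom I a b"
    using assms unfolding atom_def by auto
  have "\<alpha> {a} \<subseteq> \<alpha> {a,b}" using bspec[OF bspec[OF R(2) m(2)] m(1)] by simp
  moreover have "\<alpha> {b} \<subseteq> \<alpha> {a,b}" using bspec[OF bspec[OF R(2) m(3)] m(1)] by simp
  moreover have "\<alpha> {a} = {a}" "\<alpha> {b} = {b}" using R(3) assms by auto
  ultimately have "{a,b} \<subseteq> \<alpha> {a,b}" by auto
  then show ?thesis using bspec[OF R(1) m(1)] by auto
qed

lemma atom_le:
  assumes G: "is_forest I G" and ab: "a \<in> I" "b \<in> I" "a \<noteq> b" and D: "D \<in> G" "{a,b} \<subseteq> D"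
  shows "forest_le I (atom I a b) G"
proof -
  have F: "is_forest I (atom I a b)" using atom_forest[OF forest_finI[OF G] ab] .
  have "forest_morphism I (atom I a b) G (hullc G)"
  proof (rule hull_morphism[OF F G])
    fix C assume "C \<in> atom I a b"
    then have "C = {a,b} \<or> (\<exists>x\<in>I. C = {x})" unfolding atom_def by auto
    then show "\<exists>D\<in>G. C \<subseteq> D"
    proof
      assume "C = {a,b}" then show ?thesis using D by auto
    next
      assume "\<exists>x\<in>I. C = {x}"
      then obtain x where "x \<in> I" "C = {x}" by blast
      then show ?thesis using forest_single[OF G] by auto
    qed
  next
    fix C A assume C: "C \<in> inner (atom I a b)" and A: "A \<in> children (atom I a b) C"
    have Ce: "C = {a,b}" using C atom_inner[OF ab(3)] by auto
    have m: "{a,b} \<in> atom I a b" "{a} \<in> atom I a b" "{b} \<in> atom I a b"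
      using ab unfolding atom_def by auto
    have "children (atom I a b) {a,b} \<subseteq> {{a},{b}}"
      using children_split(1)[OF F m(1) m(2) m(3)] ab(3) by auto
    then have "A = {a} \<or> A = {b}" using A Ce by blast
    moreover have "{a,b} \<subseteq> hullc G C" using Ce hull_sup[of "{a,b}" G] by simp
    moreover have "hullc G {a} = {a}" "hullc G {b} = {b}" using hull_single[OF G] ab by auto
    ultimately show "hullc G A \<noteq> hullc G C" using ab(3) by auto
  next
    show "inj_on (hullc G) (inner (atom I a b))" using atom_inner[OF ab(3)] by simp
  qed
  then show ?thesis unfolding forest_le_def using F G by blast
qed

lemma closure_sub:
  assumes "x \<in> S" "\<And>y z. (y,z) \<in> R \<Longrightarrow> y \<in> S \<Longrightarrow> z \<in> S"
  shows "R\<^sup>* `` {x} \<subseteq> S"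
proof
  fix z assume "z \<in> R\<^sup>* `` {x}"
  then have "(x,z) \<in> R\<^sup>*" by simp
  then show "z \<in> S" by (induction rule: rtrancl_induct) (use assms in auto)
qed

lemma sym_comp_eq:
  assumes "sym R" "y \<in> R\<^sup>* `` {x}"
  shows "R\<^sup>* `` {y} = R\<^sup>* `` {x}"
proof -
  have xy: "(x,y) \<in> R\<^sup>*" using assms by simp
  have yx: "(y,x) \<in> R\<^sup>*" using sym_rtrancl[OF assms(1)] xy unfolding sym_def by blast
  show ?thesis using xy yx rtrancl_trans by fast
qed

lemma crossing:
  assumes "sym R" "K = R\<^sup>* `` {x}" "K \<inter> S \<noteq> {}" "K - S \<noteq> {}"
  shows "\<exists>a b. (a,b) \<in> R \<and> a \<in> K \<inter> S \<and> b \<in> K - S"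
proof (rule ccontr)
  assume no: "\<not> ?thesis"
  have Kc: "z \<in> K" if "y \<in> K" "(y,z) \<in> R" for y z
    using that assms(2) by (auto intro: rtrancl_into_rtrancl)
  have xK: "x \<in> K" using assms(2) by simp
  show False
  proof (cases "x \<in> S")
    case True
    have "R\<^sup>* `` {x} \<subseteq> K \<inter> S"
      by (rule closure_sub) (use True xK Kc no in blast)+
    then show False using assms by blast
  next
    case False
    have "R\<^sup>* `` {x} \<subseteq> K - S"
    proof (rule closure_sub)
      show "x \<in> K - S" using False xK by blast
      fix y z assume yz: "(y,z) \<in> R" "y \<in> K - S"
      then have "z \<in> K" using Kc by blast
      moreover have "(z,y) \<in> R" using yz assms(1) unfolding sym_def by blast
      ultimately show "z \<in> K - S" using no yz by blast
    qed
    then show False using assms by blast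
  qed
qed



locale setting =
  fixes I :: "'a set" and T :: "'a set set" and k :: nat and p q :: "nat \<Rightarrow> 'a"
  assumes finI: "finite I" and tree: "is_tree I T"
    and pq: "\<forall>m\<in>{1..k}. p m \<in> I \<and> q m \<in> I \<and> p m \<noteq> q m"
    and injv: "inj_on (\<lambda>m. vtx T (p m) (q m)) {1..k}"
begin

definition vt :: "nat \<Rightarrow> 'a set" where "vt m = vtx T (p m) (q m)"
definition Rel :: "'a set \<Rightarrow> ('a \<times> 'a) set" where
  "Rel D = {(x,y). \<exists>n\<in>{1..k}. vt n \<subseteq> D \<and> ((x = p n \<and> y = q n) \<or> (x = q n \<and> y = p n))}"
definition Cm :: "nat \<Rightarrow> 'a set" where "Cm m = (Rel (vt m))\<^sup>* `` {p m}"
definition FF :: "'a set set" where "FF = {{i} | i. i \<in> I} \<union> Cm ` {1..k}"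

lemma TF: "is_forest I T" using tree unfolding is_tree_def by simp
lemma IT: "I \<in> T" using tree unfolding is_tree_def by simp
lemma pqI: "m \<in> {1..k} \<Longrightarrow> p m \<in> I" "m \<in> {1..k} \<Longrightarrow> q m \<in> I" "m \<in> {1..k} \<Longrightarrow> p m \<noteq> q m"
  using pq by auto
lemma vt_hull: "vt m = hullc T {p m, q m}"
  unfolding vt_def vtx_def hullc_def by (rule arg_cong[where f=Inter]) auto
lemma vt_pq: "p m \<in> vt m" "q m \<in> vt m"
  unfolding vt_hull using hull_sup[of "{p m, q m}" T] by auto
lemma vt_least: "X \<in> T \<Longrightarrow> p m \<in> X \<Longrightarrow> q m \<in> X \<Longrightarrow> vt m \<subseteq> X"
  unfolding vt_hull by (rule hull_least) auto
lemma vt_mem: "m \<in> {1..k} \<Longrightarrow> vt m \<in> T"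
  unfolding vt_hull by (rule hull_mem[OF TF _ IT]) (use pqI in auto)
lemma vt_sub: "m \<in> {1..k} \<Longrightarrow> vt m \<subseteq> I"
  using vt_least[OF IT] pqI by auto
lemma vt_inj: "m \<in> {1..k} \<Longrightarrow> n \<in> {1..k} \<Longrightarrow> vt m = vt n \<Longrightarrow> m = n"
  using injv unfolding vt_def inj_on_def by blast
lemma vt_card: "m \<in> {1..k} \<Longrightarrow> 2 \<le> card (vt m)"
  using card2[OF finite_subset[OF vt_sub finI] vt_pq pqI(3)] by simp

lemma Rel_iff: "(x,y) \<in> Rel D \<longleftrightarrow>
   (\<exists>n\<in>{1..k}. vt n \<subseteq> D \<and> ((x = p n \<and> y = q n) \<or> (x = q n \<and> y = p n)))"
  unfolding Rel_def by simp
lemma Rel_sub: "(x,y) \<in> Rel D \<Longrightarrow> x \<in> D \<and> y \<in> D"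
  unfolding Rel_iff using vt_pq by blast
lemma Rel_sym: "sym (Rel D)" unfolding sym_def Rel_iff by blast
lemma Rel_mono: "D \<subseteq> D' \<Longrightarrow> Rel D \<subseteq> Rel D'"
  unfolding Rel_def by auto
lemma comp_sub: "x \<in> D \<Longrightarrow> (Rel D)\<^sup>* `` {x} \<subseteq> D"
  by (rule closure_sub) (auto dest: Rel_sub)
lemma comp_mono: "D \<subseteq> D' \<Longrightarrow> (Rel D)\<^sup>* `` {x} \<subseteq> (Rel D')\<^sup>* `` {x}"
  using rtrancl_mono[OF Rel_mono] by blast
lemma edge_in: "m \<in> {1..k} \<Longrightarrow> (p m, q m) \<in> Rel (vt m)"
  unfolding Rel_iff by blast
lemma Cm_p: "p m \<in> Cm m" unfolding Cm_def by simp
lemma Cm_q: "m \<in> {1..k} \<Longrightarrow> q m \<in> Cm m" unfolding Cm_def using edge_in by auto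
lemma Cm_sub: "Cm m \<subseteq> vt m" unfolding Cm_def by (rule comp_sub[OF vt_pq(1)])

lemma comp_nest:
  assumes "D \<subseteq> D'" "z \<in> (Rel D')\<^sup>* `` {a}" "z \<in> (Rel D)\<^sup>* `` {b}"
  shows "(Rel D)\<^sup>* `` {b} \<subseteq> (Rel D')\<^sup>* `` {a}"
proof -
  have "(Rel D)\<^sup>* `` {b} = (Rel D)\<^sup>* `` {z}" using sym_comp_eq[OF Rel_sym assms(3)] by simp
  also have "\<dots> \<subseteq> (Rel D')\<^sup>* `` {z}" by (rule comp_mono[OF assms(1)])
  also have "\<dots> = (Rel D')\<^sup>* `` {a}" using sym_comp_eq[OF Rel_sym assms(2)] .
  finally show ?thesis .
qed

lemma comp_cases:
  assumes D: "D \<in> T" "x \<in> D" and K: "K = (Rel D)\<^sup>* `` {x}" and ne: "K \<noteq> {x}"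
  shows "\<exists>n\<in>{1..k}. K = Cm n"
proof -
  have xK: "x \<in> K" using K by simp
  have KD: "K \<subseteq> D" using K comp_sub[OF D(2)] by simp
  have DI: "D \<subseteq> I" using forest_sub[OF TF D(1)] .
  have finK: "finite K" using finite_subset[OF KD finite_subset[OF DI finI]] .
  obtain y where y: "y \<in> K" "y \<noteq> x" using ne xK by blast
  have cK: "2 \<le> card K" using card2[OF finK xK y(1)] y(2) by auto
  define H where "H = hullc T K"
  have KH: "K \<subseteq> H" unfolding H_def by (rule hull_sup)
  have HT: "H \<in> T" unfolding H_def by (rule hull_mem[OF TF _ D(1) KD]) (use xK in auto)
  have HD: "H \<subseteq> D" unfolding H_def by (rule hull_least[OF D(1) KD])
  have finH: "finite H" by (rule forest_finC[OF TF HT])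
  have cH: "2 \<le> card H" using cK card_mono[OF finH KH] by linarith
  obtain H1 H2 where Hs: "H1 \<in> T" "H2 \<in> T" "H1 \<inter> H2 = {}" "H1 \<union> H2 = H"
    using forest_split[OF TF HT cH] by blast
  have Hne: "H1 \<noteq> {}" "H2 \<noteq> {}" using forest_ne[OF TF] Hs(1,2) by auto
  have K1: "K \<inter> H1 \<noteq> {}"
  proof
    assume "K \<inter> H1 = {}"
    then have "K \<subseteq> H2" using KH Hs(4) by auto
    then have "H \<subseteq> H2" unfolding H_def by (rule hull_least[OF Hs(2)])
    then show False using Hs(3,4) Hne(1) by auto
  qed
  have K2: "K - H1 \<noteq> {}"
  proof
    assume "K - H1 = {}"
    then have "K \<subseteq> H1" by auto
    then have "H \<subseteq> H1" unfolding H_def by (rule hull_least[OF Hs(1)])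
    then show False using Hs(3,4) Hne(2) by auto
  qed
  obtain a b where ab: "(a,b) \<in> Rel D" "a \<in> K \<inter> H1" "b \<in> K - H1"
    using crossing[OF Rel_sym K K1 K2] by blast
  obtain n where n: "n \<in> {1..k}" "vt n \<subseteq> D" "(a = p n \<and> b = q n) \<or> (a = q n \<and> b = p n)"
    using ab(1) unfolding Rel_iff by blast
  have abn: "a \<in> vt n" "b \<in> vt n" using n(3) vt_pq[of n] by auto
  have bH2: "b \<in> H2" using ab(3) KH Hs(4) by auto
  have pnH: "p n \<in> H" "q n \<in> H" using n(3) ab(2,3) KH by auto
  have vnH: "vt n \<subseteq> H" using vt_least[OF HT pnH] .
  have vnT: "vt n \<in> T" using vt_mem[OF n(1)] .
  have "H1 \<subseteq> vt n"
  proof -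
    have "vt n \<inter> H1 \<noteq> {}" using abn ab(2) by auto
    moreover have "\<not> vt n \<subseteq> H1" using abn(2) ab(3) by auto
    ultimately show ?thesis using forest_lam[OF TF vnT Hs(1)] by simp
  qed
  moreover have "H2 \<subseteq> vt n"
  proof -
    have "vt n \<inter> H2 \<noteq> {}" using abn bH2 by auto
    moreover have "\<not> vt n \<subseteq> H2" using abn(1) ab(2) Hs(3) by auto
    ultimately show ?thesis using forest_lam[OF TF vnT Hs(2)] by simp
  qed
  ultimately have "H \<subseteq> vt n" using Hs(4) by auto
  then have vnH': "vt n = H" using vnH by auto
  have KeqH: "K = (Rel H)\<^sup>* `` {x}"
  proof
    show "(Rel H)\<^sup>* `` {x} \<subseteq> K" using K comp_mono[OF HD] by simp
    have "(Rel D)\<^sup>* `` {x} \<subseteq> (Rel H)\<^sup>* `` {x}"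
    proof (rule closure_sub)
      show "x \<in> (Rel H)\<^sup>* `` {x}" by simp
      fix y z assume yz: "(y,z) \<in> Rel D" "y \<in> (Rel H)\<^sup>* `` {x}"
      have yK: "y \<in> K" using yz(2) comp_mono[OF HD] K by auto
      have zK: "z \<in> K" using yK yz(1) K by (auto intro: rtrancl_into_rtrancl)
      obtain n' where n': "n' \<in> {1..k}" "vt n' \<subseteq> D" "(y = p n' \<and> z = q n') \<or> (y = q n' \<and> z = p n')"
        using yz(1) unfolding Rel_iff by blast
      have "p n' \<in> H" "q n' \<in> H" using n'(3) yK zK KH by auto
      then have "vt n' \<subseteq> H" using vt_least[OF HT] by blast
      then have "(y,z) \<in> Rel H" unfolding Rel_iff using n' by blast
      then show "z \<in> (Rel H)\<^sup>* `` {x}" using yz(2) by (auto intro: rtrancl_into_rtrancl)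
    qed
    then show "K \<subseteq> (Rel H)\<^sup>* `` {x}" using K by simp
  qed
  have "p n \<in> K" using n(3) ab(2,3) by auto
  then have "(Rel H)\<^sup>* `` {p n} = (Rel H)\<^sup>* `` {x}"
    using sym_comp_eq[OF Rel_sym] KeqH by simp
  then have "Cm n = K" unfolding Cm_def vnH' using KeqH by simp
  then show ?thesis using n(1) by auto
qed

lemma single_FF: "i \<in> I \<Longrightarrow> {i} \<in> FF" unfolding FF_def by auto
lemma Cm_FF: "m \<in> {1..k} \<Longrightarrow> Cm m \<in> FF" unfolding FF_def by auto
lemma FF_cases: "C \<in> FF \<Longrightarrow> (\<exists>i\<in>I. C = {i}) \<or> (\<exists>m\<in>{1..k}. C = Cm m)"
  unfolding FF_def by auto

lemma comp_in_FF:
  assumes "D \<in> T" "x \<in> D"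
  shows "(Rel D)\<^sup>* `` {x} \<in> FF"
proof (cases "(Rel D)\<^sup>* `` {x} = {x}")
  case True
  have "x \<in> I" using forest_sub[OF TF assms(1)] assms(2) by auto
  then show ?thesis using True single_FF by simp
next
  case False
  then obtain n where "n \<in> {1..k}" "(Rel D)\<^sup>* `` {x} = Cm n"
    using comp_cases[OF assms refl] by blast
  then show ?thesis using Cm_FF by simp
qed

lemma Cm_sub_I: "m \<in> {1..k} \<Longrightarrow> Cm m \<subseteq> I"
  using Cm_sub vt_sub by blast
lemma Cm_card: "m \<in> {1..k} \<Longrightarrow> 2 \<le> card (Cm m)"
  using card2[OF finite_subset[OF Cm_sub_I finI] Cm_p Cm_q pqI(3)] by simp

lemma Cm_lam:
  assumes m: "m \<in> {1..k}" and n: "n \<in> {1..k}"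
  shows "Cm m \<subseteq> Cm n \<or> Cm n \<subseteq> Cm m \<or> Cm m \<inter> Cm n = {}"
proof -
  have "vt m \<subseteq> vt n \<or> vt n \<subseteq> vt m \<or> vt m \<inter> vt n = {}"
    using forest_lam[OF TF vt_mem[OF m] vt_mem[OF n]] .
  then show ?thesis
  proof (elim disjE)
    assume "vt m \<inter> vt n = {}"
    then show ?thesis using Cm_sub[of m] Cm_sub[of n] by auto
  next
    assume sub: "vt m \<subseteq> vt n"
    show ?thesis
    proof (cases "Cm m \<inter> Cm n = {}")
      case False
      then obtain z where "z \<in> Cm n" "z \<in> Cm m" by blast
      then have "Cm m \<subseteq> Cm n" unfolding Cm_def by (rule comp_nest[OF sub])
      then show ?thesis by simp
    qed simp
  next
    assume sub: "vt n \<subseteq> vt m"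
    show ?thesis
    proof (cases "Cm m \<inter> Cm n = {}")
      case False
      then obtain z where "z \<in> Cm m" "z \<in> Cm n" by blast
      then have "Cm n \<subseteq> Cm m" unfolding Cm_def by (rule comp_nest[OF sub])
      then show ?thesis by simp
    qed simp
  qed
qed

lemma Cm_split:
  assumes m: "m \<in> {1..k}"
  shows "\<exists>A\<in>FF. \<exists>B\<in>FF. A \<inter> B = {} \<and> A \<union> B = Cm m"
proof -
  obtain A0 B0 where s: "A0 \<in> T" "B0 \<in> T" "A0 \<inter> B0 = {}" "A0 \<union> B0 = vt m"
    using forest_split[OF TF vt_mem[OF m] vt_card[OF m]] by blast
  have "\<exists>A1 B1. A1 \<in> T \<and> B1 \<in> T \<and> A1 \<inter> B1 = {} \<and> A1 \<union> B1 = vt m \<and> p m \<in> A1"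
  proof (cases "p m \<in> A0")
    case True then show ?thesis using s by blast
  next
    case False
    then have "p m \<in> B0" using s(4) vt_pq(1)[of m] by auto
    moreover have "B0 \<inter> A0 = {}" "B0 \<union> A0 = vt m" using s(3,4) by auto
    ultimately show ?thesis using s(1,2) by blast
  qed
  then obtain A1 B1 where t: "A1 \<in> T" "B1 \<in> T" "A1 \<inter> B1 = {}" "A1 \<union> B1 = vt m" "p m \<in> A1"
    by blast
  have t': "B1 \<inter> A1 = {}" "B1 \<union> A1 = vt m" using t(3,4) by auto
  have B1ne: "B1 \<noteq> {}" using forest_ne[OF TF t(2)] .
  have qA: "q m \<notin> A1"
  proof
    assume "q m \<in> A1"
    then have "vt m \<subseteq> A1" using vt_least[OF t(1) t(5)] by simp
    then show False using t(3,4) B1ne by auto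
  qed
  have qB: "q m \<in> B1" using qA t(4) vt_pq(2)[of m] by auto
  define A where "A = (Rel A1)\<^sup>* `` {p m}"
  define B where "B = (Rel B1)\<^sup>* `` {q m}"
  have AF: "A \<in> FF" unfolding A_def by (rule comp_in_FF[OF t(1) t(5)])
  have BF: "B \<in> FF" unfolding B_def by (rule comp_in_FF[OF t(2) qB])
  have AA1: "A \<subseteq> A1" unfolding A_def by (rule comp_sub[OF t(5)])
  have BB1: "B \<subseteq> B1" unfolding B_def by (rule comp_sub[OF qB])
  have disj: "A \<inter> B = {}" using AA1 BB1 t(3) by auto
  have pA: "p m \<in> A" unfolding A_def by simp
  have qB': "q m \<in> B" unfolding B_def by simp
  have "Cm m \<subseteq> A \<union> B" unfolding Cm_def
  proof (rule closure_sub)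
    show "p m \<in> A \<union> B" using pA by simp
    fix y z assume yz: "(y,z) \<in> Rel (vt m)" "y \<in> A \<union> B"
    obtain n where n: "n \<in> {1..k}" "vt n \<subseteq> vt m" "(y = p n \<and> z = q n) \<or> (y = q n \<and> z = p n)"
      using yz(1) unfolding Rel_iff by blast
    show "z \<in> A \<union> B"
    proof (cases "n = m")
      case True
      then show ?thesis using n(3) pA qB' by auto
    next
      case False
      then have "vt n \<noteq> vt m" using vt_inj[OF n(1) m] by blast
      then have ps: "vt n \<subset> vt m" using n(2) by auto
      have yv: "y \<in> vt n" using n(3) vt_pq[of n] by auto
      show ?thesis
      proof (cases "y \<in> A")
        case True
        then have "vt n \<inter> A1 \<noteq> {}" using yv AA1 by auto
        then have "vt n \<subseteq> A1" using split_below[OF TF t(1,2,3,4) vt_mem[OF n(1)] ps] by simp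
        then have "(y,z) \<in> Rel A1" unfolding Rel_iff using n by blast
        then have "z \<in> A" using True unfolding A_def by (auto intro: rtrancl_into_rtrancl)
        then show ?thesis by simp
      next
        case False
        then have yB: "y \<in> B" using yz(2) by simp
        then have "vt n \<inter> B1 \<noteq> {}" using yv BB1 by auto
        then have "vt n \<subseteq> B1" using split_below[OF TF t(2,1) t' vt_mem[OF n(1)] ps] by simp
        then have "(y,z) \<in> Rel B1" unfolding Rel_iff using n by blast
        then have "z \<in> B" using yB unfolding B_def by (auto intro: rtrancl_into_rtrancl)
        then show ?thesis by simp
      qed
    qed
  qed
  moreover have "A \<subseteq> Cm m" unfolding A_def Cm_def by (rule comp_mono) (use t(4) in auto)
  moreover have "B \<subseteq> Cm m"
  proof
    fix z assume "z \<in> B"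
    then have "(q m, z) \<in> (Rel B1)\<^sup>*" unfolding B_def by simp
    moreover have "Rel B1 \<subseteq> Rel (vt m)" by (rule Rel_mono) (use t(4) in auto)
    ultimately have "(q m, z) \<in> (Rel (vt m))\<^sup>*" using rtrancl_mono by blast
    then have "(p m, z) \<in> (Rel (vt m))\<^sup>*" using edge_in[OF m] by (rule converse_rtrancl_into_rtrancl[rotated])
    then show "z \<in> Cm m" unfolding Cm_def by simp
  qed
  ultimately have "A \<union> B = Cm m" by auto
  then show ?thesis using AF BF disj by blast
qed

lemma FF_ne_sub: "C \<in> FF \<Longrightarrow> C \<noteq> {} \<and> C \<subseteq> I"
proof -
  assume "C \<in> FF"
  then have "(\<exists>i\<in>I. C = {i}) \<or> (\<exists>m\<in>{1..k}. C = Cm m)" by (rule FF_cases)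
  then show ?thesis
  proof (elim disjE bexE)
    fix m assume "m \<in> {1..k}" "C = Cm m"
    then show ?thesis using Cm_p[of m] Cm_sub_I[of m] by auto
  qed auto
qed

lemma FF_lam: "C \<in> FF \<Longrightarrow> D \<in> FF \<Longrightarrow> C \<subseteq> D \<or> D \<subseteq> C \<or> C \<inter> D = {}"
proof -
  assume C: "C \<in> FF" and D: "D \<in> FF"
  show "C \<subseteq> D \<or> D \<subseteq> C \<or> C \<inter> D = {}"
    using FF_cases[OF C] FF_cases[OF D]
  proof (elim disjE bexE)
    fix m n assume "m \<in> {1..k}" "C = Cm m" "n \<in> {1..k}" "D = Cm n"
    then show ?thesis using Cm_lam by simp
  qed auto
qed

lemma FF_spl: "C \<in> FF \<Longrightarrow> 2 \<le> card C \<Longrightarrow> \<exists>A\<in>FF. \<exists>B\<in>FF. A \<inter> B = {} \<and> A \<union> B = C"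
proof -
  assume C: "C \<in> FF" "2 \<le> card C"
  then obtain m where "m \<in> {1..k}" "C = Cm m" using FF_cases[OF C(1)] by auto
  then show "\<exists>A\<in>FF. \<exists>B\<in>FF. A \<inter> B = {} \<and> A \<union> B = C" using Cm_split by simp
qed

lemma FF_forest: "is_forest I FF"
proof -
  have a: "\<forall>C\<in>FF. C \<noteq> {} \<and> C \<subseteq> I" using FF_ne_sub by simp
  have b: "\<forall>i\<in>I. {i} \<in> FF" using single_FF by simp
  have c: "\<forall>C\<in>FF. \<forall>D\<in>FF. C \<subseteq> D \<or> D \<subseteq> C \<or> C \<inter> D = {}" using FF_lam by simp
  have d: "\<forall>C\<in>FF. 2 \<le> card C \<longrightarrow> (\<exists>A\<in>FF. \<exists>B\<in>FF. A \<inter> B = {} \<and> A \<union> B = C)"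
    using FF_spl by simp
  show ?thesis unfolding is_forest_def by (intro conjI finI a b c d)
qed

lemma inner_FF: "C \<in> inner FF \<Longrightarrow> \<exists>m\<in>{1..k}. C = Cm m"
  unfolding inner_def using FF_cases by fastforce

lemma FF_univ:
  assumes G: "is_forest I G" and rho: "forest_morphism I G T \<rho>"
    and cov: "\<forall>m\<in>{1..k}. \<exists>D\<in>G. {p m, q m} \<subseteq> D"
  shows "forest_morphism I FF G (hullc G)"
proof -
  define g where "g m = hullc G {p m, q m}" for m
  have gG: "g m \<in> G" if mk: "m \<in> {1..k}" for m
  proof -
    obtain D where D: "D \<in> G" "{p m, q m} \<subseteq> D" using cov mk by blast
    show ?thesis unfolding g_def using hull_mem[OF G _ D] by simp
  qed
  have gpq: "p m \<in> g m" "q m \<in> g m" for m unfolding g_def using hull_sup[of "{p m, q m}" G] by auto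
  have gmin: "g m \<subseteq> D" if "D \<in> G" "p m \<in> D" "q m \<in> D" for m D
    unfolding g_def using that by (intro hull_least) auto
  have rg: "\<rho> (g m) = vt m" if m: "m \<in> {1..k}" for m
    using key_lemma[OF G TF rho gG[OF m] gpq pqI(3)[OF m] gmin] vt_hull by simp
  have rmono: "\<forall>C\<in>G. \<forall>C'\<in>G. C \<subseteq> C' \<longrightarrow> \<rho> C \<subseteq> \<rho> C'"
    using rho unfolding forest_morphism_def by simp
  have Cg: "Cm m \<subseteq> g m" if m: "m \<in> {1..k}" for m
    unfolding Cm_def
  proof (rule closure_sub)
    show "p m \<in> g m" by (rule gpq)
    fix y z assume yz: "(y,z) \<in> Rel (vt m)" "y \<in> g m"
    obtain n where n: "n \<in> {1..k}" "vt n \<subseteq> vt m" "(y = p n \<and> z = q n) \<or> (y = q n \<and> z = p n)"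
      using yz(1) unfolding Rel_iff by blast
    have yn: "y \<in> g n" "z \<in> g n" using n(3) gpq[of n] by auto
    have "g n \<subseteq> g m \<or> g m \<subseteq> g n \<or> g n \<inter> g m = {}"
      using forest_lam[OF G gG[OF n(1)] gG[OF m]] .
    moreover have "g n \<inter> g m \<noteq> {}" using yn yz(2) by auto
    moreover have "z \<in> g m" if "g m \<subseteq> g n"
    proof -
      have "\<rho> (g m) \<subseteq> \<rho> (g n)" using rmono gG[OF n(1)] gG[OF m] that by blast
      then have "vt m \<subseteq> vt n" using rg[OF m] rg[OF n(1)] by simp
      then have "vt n = vt m" using n(2) by auto
      then have "n = m" using vt_inj[OF n(1) m] by simp
      then show ?thesis using n(3) gpq[of m] by auto
    qed
    ultimately show "z \<in> g m" using yn by auto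
  qed
  have hC: "hullc G (Cm m) = g m" if m: "m \<in> {1..k}" for m
  proof
    show "hullc G (Cm m) \<subseteq> g m" by (rule hull_least[OF gG[OF m] Cg[OF m]])
    have "{p m, q m} \<subseteq> Cm m" using Cm_p Cm_q[OF m] by simp
    then show "g m \<subseteq> hullc G (Cm m)" unfolding g_def by (rule hull_mono)
  qed
  show ?thesis
  proof (rule hull_morphism[OF FF_forest G])
    fix C assume "C \<in> FF"
    then show "\<exists>D\<in>G. C \<subseteq> D"
    proof (elim FF_cases[elim_format] disjE bexE)
      fix i assume "i \<in> I" "C = {i}" then show ?thesis using forest_single[OF G] by auto
    next
      fix m assume "m \<in> {1..k}" "C = Cm m" then show ?thesis using Cg gG by auto
    qed
  next
    fix C A assume C: "C \<in> inner FF" and A: "A \<in> children FF C"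
    obtain m where m: "m \<in> {1..k}" "C = Cm m" using inner_FF[OF C] by blast
    have AF: "A \<in> FF" "A \<subset> C" using A unfolding children_def by auto
    show "hullc G A \<noteq> hullc G C"
      using FF_cases[OF AF(1)]
    proof (elim disjE bexE)
      fix i assume i: "i \<in> I" "A = {i}"
      have "hullc G A = {i}" using hull_single[OF G i(1)] i(2) by simp
      moreover have "p m \<in> hullc G C" "q m \<in> hullc G C" using hC[OF m(1)] m(2) gpq by auto
      ultimately show ?thesis using pqI(3)[OF m(1)] by auto
    next
      fix n assume n: "n \<in> {1..k}" "A = Cm n"
      show ?thesis
      proof
        assume "hullc G A = hullc G C"
        then have "g n = g m" using hC[OF n(1)] hC[OF m(1)] n(2) m(2) by simp
        then have "vt n = vt m" using rg[OF n(1)] rg[OF m(1)] by metis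
        then have "n = m" using vt_inj[OF n(1) m(1)] by simp
        then show False using AF(2) n(2) m(2) by simp
      qed
    qed
  next
    show "inj_on (hullc G) (inner FF)"
    proof (rule inj_onI)
      fix C C' assume C: "C \<in> inner FF" and C': "C' \<in> inner FF" and eq: "hullc G C = hullc G C'"
      obtain m where m: "m \<in> {1..k}" "C = Cm m" using inner_FF[OF C] by blast
      obtain n where n: "n \<in> {1..k}" "C' = Cm n" using inner_FF[OF C'] by blast
      have "g m = g n" using eq hC[OF m(1)] hC[OF n(1)] m(2) n(2) by simp
      then have "vt m = vt n" using rg[OF n(1)] rg[OF m(1)] by metis
      then have "m = n" using vt_inj[OF m(1) n(1)] by simp
      then show "C = C'" using m(2) n(2) by simp
    qed
  qed
qed

lemma atoms_FF: "m \<in> {1..k} \<Longrightarrow> forest_le I (atom I (p m) (q m)) FF"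
  by (rule atom_le[OF FF_forest pqI Cm_FF]) (use Cm_p Cm_q in auto)

lemma FF_le_T: "forest_le I FF T"
proof -
  have "forest_morphism I FF T (hullc T)"
  proof (rule FF_univ[OF TF id_morphism[OF TF]])
    show "\<forall>m\<in>{1..k}. \<exists>D\<in>T. {p m, q m} \<subseteq> D"
    proof
      fix m assume "m \<in> {1..k}"
      then have "{p m, q m} \<subseteq> I" using pqI by simp
      then show "\<exists>D\<in>T. {p m, q m} \<subseteq> D" using IT by (intro bexI)
    qed
  qed
  then show ?thesis unfolding forest_le_def using FF_forest TF by blast
qed

lemma join_FF: "is_join_below I T (\<lambda>m. atom I (p m) (q m)) {1..k} FF"
  unfolding is_join_below_def
proof (intro conjI allI impI ballI)
  show "forest_le I FF T" by (rule FF_le_T)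
next
  fix m assume "m \<in> {1..k}" then show "forest_le I (atom I (p m) (q m)) FF" by (rule atoms_FF)
next
  fix G assume G: "forest_le I G T \<and> (\<forall>m\<in>{1..k}. forest_le I (atom I (p m) (q m)) G)"
  have GF: "is_forest I G" using G unfolding forest_le_def by simp
  obtain \<rho> where rho: "forest_morphism I G T \<rho>" using G unfolding forest_le_def by blast
  have cov: "\<forall>m\<in>{1..k}. \<exists>D\<in>G. {p m, q m} \<subseteq> D"
  proof
    fix m assume mk: "m \<in> {1..k}"
    then have "forest_le I (atom I (p m) (q m)) G" using G by simp
    then show "\<exists>D\<in>G. {p m, q m} \<subseteq> D" by (rule atom_cover[OF _ pqI(1)[OF mk] pqI(2)[OF mk]])
  qed
  have "forest_morphism I FF G (hullc G)" by (rule FF_univ[OF GF rho cov])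
  then show "forest_le I FF G" unfolding forest_le_def using FF_forest GF by blast
qed

lemma card_inner_FF: "card (inner FF) \<le> k"
proof -
  have "inner FF \<subseteq> Cm ` {1..k}"
  proof
    fix C assume "C \<in> inner FF"
    then obtain m where "m \<in> {1..k}" "C = Cm m" using inner_FF by blast
    then show "C \<in> Cm ` {1..k}" by simp
  qed
  then have "card (inner FF) \<le> card (Cm ` {1..k})" by (intro card_mono) auto
  also have "\<dots> \<le> card {1..k}" by (rule card_image_le) simp
  finally show ?thesis by simp
qed

lemma part2:
  assumes J: "is_join_below I T (\<lambda>m. atom I (p m) (q m)) {1..k} F'"
    and phi: "forest_morphism I F' T \<phi>"
  shows "\<phi> ` inner F' = vt ` {1..k}"
proof -
  have Jc: "forest_le I F' T \<and> (\<forall>m\<in>{1..k}. forest_le I (atom I (p m) (q m)) F') \<and>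
    (\<forall>G. forest_le I G T \<and> (\<forall>m\<in>{1..k}. forest_le I (atom I (p m) (q m)) G) \<longrightarrow> forest_le I F' G)"
    using J unfolding is_join_below_def .
  have J1: "forest_le I F' T" using conjunct1[OF Jc] .
  have J2: "\<forall>m\<in>{1..k}. forest_le I (atom I (p m) (q m)) F'" using conjunct1[OF conjunct2[OF Jc]] .
  have J3: "\<forall>G. forest_le I G T \<and> (\<forall>m\<in>{1..k}. forest_le I (atom I (p m) (q m)) G) \<longrightarrow> forest_le I F' G"
    using conjunct2[OF conjunct2[OF Jc]] .
  have F': "is_forest I F'" using J1 unfolding forest_le_def by simp
  define g where "g m = hullc F' {p m, q m}" for m
  have gG: "g m \<in> F'" if mk: "m \<in> {1..k}" for m
  proof -
    have "forest_le I (atom I (p m) (q m)) F'" using J2 mk by blast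
    then obtain D where D: "D \<in> F'" "{p m, q m} \<subseteq> D"
      using atom_cover[OF _ pqI(1)[OF mk] pqI(2)[OF mk]] by blast
    show ?thesis unfolding g_def using hull_mem[OF F' _ D] by simp
  qed
  have gpq: "p m \<in> g m" "q m \<in> g m" for m unfolding g_def using hull_sup[of "{p m, q m}" F'] by auto
  have gmin: "g m \<subseteq> D" if "D \<in> F'" "p m \<in> D" "q m \<in> D" for m D
    unfolding g_def using that by (intro hull_least) auto
  have rg: "\<phi> (g m) = vt m" if m: "m \<in> {1..k}" for m
    using key_lemma[OF F' TF phi gG[OF m] gpq pqI(3)[OF m] gmin] vt_hull by simp
  have ginner: "g m \<in> inner F'" if m: "m \<in> {1..k}" for m
    using card2[OF forest_finC[OF F' gG[OF m]] gpq pqI(3)[OF m]] gG[OF m] unfolding inner_def by simp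
  have ginj: "inj_on g {1..k}"
  proof (rule inj_onI)
    fix m n assume "m \<in> {1..k}" "n \<in> {1..k}" "g m = g n"
    then have "vt m = vt n" using rg by metis
    then show "m = n" using vt_inj \<open>m \<in> {1..k}\<close> \<open>n \<in> {1..k}\<close> by simp
  qed
  have "\<forall>m\<in>{1..k}. forest_le I (atom I (p m) (q m)) FF" using atoms_FF by simp
  then have "forest_le I F' FF" using spec[OF J3, of FF] FF_le_T by blast
  then obtain \<chi> where chi: "forest_morphism I F' FF \<chi>" unfolding forest_le_def by blast
  have chi1: "inj_on \<chi> (inner F')" "\<forall>C\<in>inner F'. \<chi> C \<in> inner FF"
    using chi unfolding forest_morphism_def by simp_all
  have finIF: "finite (inner FF)" using forest_finite[OF FF_forest] unfolding inner_def by simp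
  have finIF': "finite (inner F')" using forest_finite[OF F'] unfolding inner_def by simp
  have "card (inner F') = card (\<chi> ` inner F')" using card_image[OF chi1(1)] by simp
  also have "\<dots> \<le> card (inner FF)" using chi1(2) finIF by (intro card_mono) auto
  also have "\<dots> \<le> k" by (rule card_inner_FF)
  finally have c1: "card (inner F') \<le> k" .
  have c2: "card (g ` {1..k}) = k" using card_image[OF ginj] by simp
  have sub: "g ` {1..k} \<subseteq> inner F'" using ginner by blast
  have eq: "g ` {1..k} = inner F'" using card_seteq[OF finIF' sub] c1 c2 by simp
  have "\<phi> ` inner F' = (\<lambda>m. \<phi> (g m)) ` {1..k}" unfolding eq[symmetric] by (simp add: image_image)
  also have "\<dots> = vt ` {1..k}" using rg by (intro image_cong) auto
  finally show ?thesis .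
qed

end


theorem proposition5p3:
  fixes I :: "'a set" and T :: "'a set set" and k :: nat and p q :: "nat \<Rightarrow> 'a"
  assumes "finite I" and "is_tree I T"
    and "\<forall>m\<in>{1..k}. p m \<in> I \<and> q m \<in> I \<and> p m \<noteq> q m"
    and "inj_on (\<lambda>m. vtx T (p m) (q m)) {1..k}"
  shows "(\<exists>F. is_join_below I T (\<lambda>m. atom I (p m) (q m)) {1..k} F) \<and>
         (\<forall>F \<phi>. is_join_below I T (\<lambda>m. atom I (p m) (q m)) {1..k} F \<and> forest_morphism I F T \<phi>
            \<longrightarrow> \<phi> ` inner F = (\<lambda>m. vtx T (p m) (q m)) ` {1..k})"
proof -
  interpret S: setting I T k p q using assms by unfold_locales
  have e: "(\<lambda>m. vtx T (p m) (q m)) ` {1..k} = S.vt ` {1..k}" unfolding S.vt_def by simp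
  show ?thesis
  proof (intro conjI allI impI)
    show "\<exists>F. is_join_below I T (\<lambda>m. atom I (p m) (q m)) {1..k} F" using S.join_FF by blast
  next
    fix F \<phi> assume H: "is_join_below I T (\<lambda>m. atom I (p m) (q m)) {1..k} F \<and> forest_morphism I F T \<phi>"
    have "\<phi> ` inner F = S.vt ` {1..k}" using S.part2[OF conjunct1[OF H] conjunct2[OF H]] .
    then show "\<phi> ` inner F = (\<lambda>m. vtx T (p m) (q m)) ` {1..k}" using e by simp
  qed
qed

end
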